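(* Let $n\geq 3$ and let $\rho>0$, $q>0$ be constants. Let $(m,\mathbf{U})$ lie in the interior of the convex hull $K_{\rho,q}^{\mathrm{co}}$. Then there exist $\bar m\in\mathbb{R}^n$ and $\bar{\mathbf{U}}\in\mathbb{S}_0^{n\times n}$ such that the closed segment with endpoints $(m-\bar m,\mathbf{U}-\bar{\mathbf{U}})$ and $(m+\bar m,\mathbf{U}+\bar{\mathbf{U}})$ is contained in the interior of $K_{\rho,q}^{\mathrm{co}}$ and is parallel to $$\Big(a,\frac{a\otimes a}{\rho}\Big)-\Big(b,\frac{b\otimes b}{\rho}\Big)$$ for some $a,b\in\mathbb{R}^n$ with $|a|=|b|=\sqrt{n\rho q}$. Moreover, $$|\bar m|\geq\frac{C}{\sqrt{n\rho q}}\big(n\rho q-|m|^2\big),$$ where $C>0$ is a constant depending only on $n$.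
   Context: $\mathbb{S}_0^{n\times n}$ denotes the real symmetric trace-free $n\times n$ matrices. For constants $\rho,q>0$, $$K_{\rho,q}=\Big\{(m,\mathbf{U})\in\mathbb{R}^n\times\mathbb{S}_0^{n\times n}:\frac{m\otimes m}{\rho}-\mathbf{U}=q\mathbf{I}_n\Big\}$$ (equivalently $|m|=\sqrt{n\rho q}$ and $\mathbf{U}=\frac{m\otimes m}{\rho}-\frac{|m|^2}{n\rho}\mathbf{I}_n$), and $K_{\rho,q}^{\mathrm{co}}$ is its convex hull in $\mathbb{R}^n\times\mathbb{S}_0^{n\times n}$. *)

theory Defs
  imports "HOL-Analysis.Analysis"
begin

definition outer :: "real^'n \<Rightarrow> real^'n \<Rightarrow> real^'n^'n" where
  "outer a b = (\<chi> i j. a $ i * b $ j)"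

definition symm0 :: "(real^'n^'n) set" where
  "symm0 = {U. transpose U = U \<and> trace U = 0}"

definition Space :: "((real^'n) \<times> (real^'n^'n)) set" where
  "Space = UNIV \<times> symm0"

definition Kset :: "real \<Rightarrow> real \<Rightarrow> ((real^'n) \<times> (real^'n^'n)) set" where
  "Kset \<rho> q = {(m, U). U \<in> symm0 \<and> (1/\<rho>) *\<^sub>R outer m m - U = q *\<^sub>R mat 1}"

definition intKco :: "real \<Rightarrow> real \<Rightarrow> ((real^'n) \<times> (real^'n^'n)) set" where
  "intKco \<rho> q = (top_of_set Space) interior_of (convex hull (Kset \<rho> q))"

end

theory Submission
  imports Defs
begin

lemma transpose_add': "transpose (A + B) = transpose A + (transpose B :: real^'n^'m)"
  by (simp add: transpose_def vec_eq_iff)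

lemma trace_scale': "trace (c *\<^sub>R (A::real^'n^'n)) = c * trace A"
  by (simp add: trace_def sum_distrib_left)

lemma subspace_symm0: "subspace (symm0 :: (real^'n^'n) set)"
  unfolding subspace_def symm0_def
  by (auto simp: transpose_def vec_eq_iff trace_def sum.distrib sum_distrib_left[symmetric])

lemma subspace_Space: "subspace (Space :: ((real^'n) \<times> (real^'n^'n)) set)"
  unfolding Space_def
  using subspace_symm0 unfolding subspace_def by (auto simp: zero_prod_def)

lemma trace_outer: "trace (outer a a) = (norm (a::real^'n))^2"
  by (simp add: trace_def outer_def power2_norm_eq_inner inner_vec_def)

lemma Kset_elem:
  fixes a :: "real^'n"
  assumes "(a, V) \<in> Kset \<rho> q" "\<rho> > 0"
  shows "norm a = sqrt (real CARD('n) * \<rho> * q)" "V = (1/\<rho>) *\<^sub>R outer a a - q *\<^sub>R mat 1"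
    "V \<in> symm0"
proof -
  have V: "V \<in> symm0" "(1/\<rho>) *\<^sub>R outer a a - V = q *\<^sub>R mat 1"
    using assms(1) by (auto simp: Kset_def)
  then show "V = (1/\<rho>) *\<^sub>R outer a a - q *\<^sub>R mat 1" "V \<in> symm0" by (auto simp: algebra_simps)
  have "trace ((1/\<rho>) *\<^sub>R outer a a - V) = trace (q *\<^sub>R (mat 1 :: real^'n^'n))"
    using V(2) by simp
  hence "(norm a)^2 / \<rho> = q * real CARD('n)"
    using V(1) by (simp add: trace_sub trace_scale' trace_outer trace_I symm0_def)
  hence "(norm a)^2 = real CARD('n) * \<rho> * q" using assms(2) by (simp add: field_simps)
  thus "norm a = sqrt (real CARD('n) * \<rho> * q)"
    by (metis norm_ge_zero real_sqrt_unique)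
qed

lemma Kset_Space: "\<rho> > 0 \<Longrightarrow> Kset \<rho> q \<subseteq> (Space :: ((real^'n) \<times> (real^'n^'n)) set)"
  using Kset_elem(3) unfolding Space_def by fast

lemma hull_Space: "\<rho> > 0 \<Longrightarrow> convex hull Kset \<rho> q \<subseteq> (Space :: ((real^'n) \<times> (real^'n^'n)) set)"
  by (simp add: Kset_Space hull_minimal subspace_Space subspace_imp_convex)

lemma intKco_shift:
  fixes z y :: "(real^'n) \<times> (real^'n^'n)"
  assumes "\<rho> > 0" "z \<in> intKco \<rho> q" "y \<in> convex hull Kset \<rho> q" "0 \<le> \<theta>" "\<theta> < 1"
  shows "(1 - \<theta>) *\<^sub>R z + \<theta> *\<^sub>R y \<in> intKco \<rho> q"
proof -
  obtain T where T: "openin (top_of_set Space) T" "z \<in> T" "T \<subseteq> convex hull Kset \<rho> q"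
    using assms(2) unfolding intKco_def interior_of_def by auto
  obtain T' where T': "open T'" "T = T' \<inter> Space"
    using T(1) by (auto simp: openin_open)
  define f where "f = (\<lambda>x. \<theta> *\<^sub>R y + (1 - \<theta>) *\<^sub>R x)"
  have yS: "y \<in> Space" using hull_Space assms(1,3) by blast
  have "open (f ` T')" unfolding f_def using open_affinity[OF T'(1), of "1 - \<theta>"] assms(5) by simp
  moreover have "f ` T = f ` T' \<inter> Space"
  proof
    show "f ` T \<subseteq> f ` T' \<inter> Space"
    proof
      fix v assume "v \<in> f ` T"
      then obtain x where x: "x \<in> T" "v = f x" by auto
      have "f x \<in> Space" using x T'(2) yS subspace_Space unfolding f_def
        by (meson IntD2 subspace_add subspace_scale)
      then show "v \<in> f ` T' \<inter> Space" using x T'(2) by auto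
    qed
    show "f ` T' \<inter> Space \<subseteq> f ` T"
    proof
      fix v assume v: "v \<in> f ` T' \<inter> Space"
      then obtain x where x: "x \<in> T'" "v = f x" by auto
      have "x = (1 / (1 - \<theta>)) *\<^sub>R (v - \<theta> *\<^sub>R y)"
        using x(2) assms(5) by (simp add: f_def)
      hence "x \<in> Space" using v yS subspace_Space
        by (metis IntD2 subspace_diff subspace_scale)
      thus "v \<in> f ` T" using x T'(2) by auto
    qed
  qed
  ultimately have "openin (top_of_set Space) (f ` T)"
    by (auto simp: openin_open)
  moreover have "f z \<in> f ` T" using T(2) by auto
  moreover have "f ` T \<subseteq> convex hull Kset \<rho> q"
    using T(3) assms(3,4,5) convex_convex_hull unfolding f_def convex_alt
    by (smt (verit, ccfv_SIG) add.commute image_subset_iff subsetD)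
  ultimately show ?thesis unfolding intKco_def interior_of_def f_def
    by (auto simp: add.commute)
qed


lemma hull_move:
  fixes S :: "'a::real_vector set"
  assumes S: "finite S" and u: "\<forall>y\<in>S. 0 \<le> u y" "sum u S = 1"
    and z: "z = (\<Sum>y\<in>S. u y *\<^sub>R y)"
    and xs: "x \<in> S" "x1 \<in> S" "x \<noteq> x1" and mu: "\<bar>\<mu>\<bar> \<le> u x" "u x \<le> u x1"
  shows "z + \<mu> *\<^sub>R (x - x1) \<in> convex hull S"
proof -
  define v where "v y = u y + \<mu> * ((if y = x then 1 else 0) - (if y = x1 then 1 else 0))" for y
  have "\<forall>y\<in>S. 0 \<le> v y" using u(1) mu xs(3) by (auto simp: v_def)
  moreover have "sum v S = 1"
    using S xs u(2) by (simp add: v_def sum.distrib sum_distrib_left[symmetric] sum_subtractf)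
  moreover have "(\<Sum>y\<in>S. v y *\<^sub>R y) = z + \<mu> *\<^sub>R (x - x1)"
  proof -
    have "(\<Sum>y\<in>S. v y *\<^sub>R y) = (\<Sum>y\<in>S. u y *\<^sub>R y) + \<mu> *\<^sub>R ((\<Sum>y\<in>S. (if y = x then 1 else 0) *\<^sub>R y) - (\<Sum>y\<in>S. (if y = x1 then 1 else 0) *\<^sub>R y))"
      by (simp add: v_def scaleR_add_left sum.distrib scaleR_sum_right sum_subtractf[symmetric]
           scaleR_diff_left scaleR_diff_right right_diff_distrib)
    also have "\<dots> = z + \<mu> *\<^sub>R (x - x1)"
      using S xs z by (simp add: if_distrib[of "\<lambda>c. c *\<^sub>R _"] cong: if_cong)
    finally show ?thesis .
  qed
  ultimately show ?thesis using convex_hull_finite[OF S] by blast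
qed


lemma seg_id: "(1 - s) *\<^sub>R (z - w) + s *\<^sub>R (z + w) = z + (2 * s - 1) *\<^sub>R (w::'a::real_vector)"
  by (simp add: algebra_simps flip: scaleR_add_left)
lemma seg_id2: "z + c *\<^sub>R ((u / 2) *\<^sub>R d) = (1 - c/2) *\<^sub>R z + (c/2) *\<^sub>R (z + u *\<^sub>R (d::'a::real_vector))"
  by (simp add: algebra_simps flip: scaleR_add_left)
lemma seg_id3: "z + c *\<^sub>R ((u / 2) *\<^sub>R d) = (1 - (-c)/2) *\<^sub>R z + ((-c)/2) *\<^sub>R (z + (-u) *\<^sub>R (d::'a::real_vector))"
  by (simp add: algebra_simps flip: scaleR_add_left) (simp add: scaleR_add_left)

lemma main_lemma:
  fixes m :: "real^'n" and U :: "real^'n^'n"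
  assumes rho: "\<rho> > 0" and q: "q > 0" and mU: "(m, U) \<in> intKco \<rho> q"
  defines "R \<equiv> sqrt (real CARD('n) * \<rho> * q)"
    and "N \<equiv> DIM((real^'n) \<times> (real^'n^'n)) + 1"
  shows "\<exists>mb Ub. Ub \<in> symm0 \<and>
              closed_segment (m - mb, U - Ub) (m + mb, U + Ub) \<subseteq> intKco \<rho> q \<and>
              (\<exists>a b t. norm a = sqrt (real CARD('n) * \<rho> * q) \<and>
                       norm b = sqrt (real CARD('n) * \<rho> * q) \<and> a \<noteq> b \<and>
                       (mb, Ub) = t *\<^sub>R (a - b, (1/\<rho>) *\<^sub>R outer a a - (1/\<rho>) *\<^sub>R outer b b)) \<and>
              norm mb \<ge> (1 / (4 * real N)) / sqrt (real CARD('n) * \<rho> * q) *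
                         (real CARD('n) * \<rho> * q - (norm m)\<^sup>2)"
proof -
  have R0: "R > 0" unfolding R_def using rho q by simp
  have R2: "R^2 = real CARD('n) * \<rho> * q" unfolding R_def using rho q by simp
  have N0: "N > 0" unfolding N_def by simp
  show ?thesis
  proof (cases "real CARD('n) * \<rho> * q - (norm m)\<^sup>2 \<le> 0")
    case True
    define a where "a = R *\<^sub>R (axis undefined 1 :: real^'n)"
    have na: "norm a = R" "norm (-a) = R" unfolding a_def using R0 by auto
    have "a \<noteq> 0" using na R0 by auto
    hence ne: "a \<noteq> -a" by (metis scaleR_2 scaleR_eq_0_iff zero_neq_numeral eq_neg_iff_add_eq_0)
    have le: "1 / (4 * real N) / R * (real CARD('n) * \<rho> * q - (norm m)\<^sup>2) \<le> 0"
      using True R0 N0 by (simp add: divide_nonpos_pos)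
    show ?thesis
    proof (rule exI[of _ 0], rule exI[of _ 0], intro conjI)
      show "(0::real^'n^'n) \<in> symm0" using subspace_0[OF subspace_symm0] .
      show "closed_segment (m - 0, U - 0) (m + 0, U + 0) \<subseteq> intKco \<rho> q"
        using mU by simp
      show "\<exists>a' b t. norm a' = sqrt (real CARD('n) * \<rho> * q) \<and>
                       norm b = sqrt (real CARD('n) * \<rho> * q) \<and> a' \<noteq> b \<and>
                       ((0::real^'n), (0::real^'n^'n)) = t *\<^sub>R (a' - b, (1/\<rho>) *\<^sub>R outer a' a' - (1/\<rho>) *\<^sub>R outer b b)"
        by (rule exI[of _ a], rule exI[of _ "-a"], rule exI[of _ 0]) (use na ne in \<open>simp add: R_def\<close>)
      show "1 / (4 * real N) / sqrt (real CARD('n) * \<rho> * q) * (real CARD('n) * \<rho> * q - (norm m)\<^sup>2) \<le> norm (0::real^'n)"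
        using le by (simp add: R_def)
    qed
  next
    case False
    hence pos: "R^2 - (norm m)^2 > 0" using R2 by simp
    hence mR: "norm m < R" using R0 by (smt (verit) norm_ge_zero power_mono)
    let ?z = "(m, U)"
    have zK: "?z \<in> convex hull Kset \<rho> q" using mU unfolding intKco_def by (meson interior_of_subset subsetD)
    then obtain S where S: "finite S" "S \<subseteq> Kset \<rho> q" "card S \<le> N" "?z \<in> convex hull S"
      using caratheodory[of "Kset \<rho> q"] unfolding N_def by auto
    obtain u where u: "\<forall>y\<in>S. 0 \<le> u y" "sum u S = 1" "(\<Sum>y\<in>S. u y *\<^sub>R y) = ?z"
      using S(4) convex_hull_finite[OF S(1)] by auto
    have Sne: "S \<noteq> {}" using S(4) by auto
    have nS: "norm (fst y) = R" if "y \<in> S" for y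
      using Kset_elem(1)[of "fst y" "snd y" \<rho> q] S(2) that rho unfolding R_def by auto
    have "Max (u ` S) \<in> u ` S" using Max_in S(1) Sne by auto
    then obtain x1 where x10: "x1 \<in> S" "u x1 = Max (u ` S)" by auto
    have x1: "x1 \<in> S" "\<forall>y\<in>S. u y \<le> u x1"
      using x10 S(1) by auto
    define b where "b = fst x1"
    define g where "g y = u y * norm (fst y - b)" for y
    have "Max (g ` S) \<in> g ` S" using Max_in S(1) Sne by auto
    then obtain x2 where x20: "x2 \<in> S" "g x2 = Max (g ` S)" by auto
    have x2: "x2 \<in> S" "\<forall>y\<in>S. g y \<le> g x2"
      using x20 S(1) by auto
    have msum: "m = (\<Sum>y\<in>S. u y *\<^sub>R fst y)"
      using arg_cong[OF u(3), of fst] by (simp add: fst_sum)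
    have "b - m = (\<Sum>y\<in>S. u y *\<^sub>R (b - fst y))"
      using u(2) msum by (simp add: scaleR_diff_right sum_subtractf scaleR_sum_left[symmetric])
    hence "norm (b - m) \<le> (\<Sum>y\<in>S. norm (u y *\<^sub>R (b - fst y)))" by (metis norm_sum)
    also have "\<dots> = sum g S" using u(1) by (intro sum.cong) (auto simp: g_def norm_minus_commute)
    finally have bm: "norm (b - m) \<le> sum g S" .
    have nb: "norm b = R" using nS x1(1) b_def by simp
    have "R^2 - (norm m)^2 = (b - m) \<bullet> (b + m)"
    proof -
      have bb: "b \<bullet> b = R^2" using nb by (simp add: power2_norm_eq_inner[symmetric])
      show ?thesis by (simp add: bb[symmetric] power2_norm_eq_inner inner_simps inner_commute)
    qed
    also have "\<dots> \<le> norm (b - m) * norm (b + m)" by (rule Cauchy_Schwarz_ineq2[THEN abs_le_D1])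
    also have "\<dots> \<le> norm (b - m) * (2 * R)"
      using norm_triangle_ineq[of b m] nb mR by (intro mult_left_mono) auto
    also have "\<dots> \<le> sum g S * (2 * R)" using bm R0 by simp
    also have "\<dots> \<le> (real (card S) * g x2) * (2 * R)"
      using sum_bounded_above[of S g "g x2"] x2 R0 by (intro mult_right_mono) auto
    also have "\<dots> \<le> (real N * g x2) * (2 * R)"
    proof -
      have "g x2 \<ge> 0" using u(1) x2(1) by (simp add: g_def)
      thus ?thesis using S(3) R0 by (intro mult_right_mono) (auto intro: mult_right_mono)
    qed
    finally have key: "R^2 - (norm m)^2 \<le> real N * g x2 * (2 * R)" .
    have gpos: "g x2 > 0"
    proof (rule ccontr)
      assume "\<not> g x2 > 0" hence "g x2 \<le> 0" by simp
      hence "real N * g x2 \<le> 0" by (simp add: mult_nonneg_nonpos)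
      hence "real N * g x2 * (2 * R) \<le> 0" using R0 by (simp add: mult_nonpos_nonneg)
      thus False using key pos by linarith
    qed
    define a where "a = fst x2"
    have ab: "a \<noteq> b" using gpos by (auto simp: g_def a_def)
    hence x12: "x2 \<noteq> x1" using a_def b_def by auto
    have ux2: "u x2 > 0" using gpos u(1) x2(1) by (simp add: g_def zero_less_mult_iff)
    define w where "w = (u x2 / 2) *\<^sub>R (x2 - x1)"
    have x2eq: "x2 = (a, (1/\<rho>) *\<^sub>R outer a a - q *\<^sub>R mat 1)"
      using Kset_elem(2)[of a "snd x2" \<rho> q] S(2) x2(1) rho a_def by (metis prod.collapse subsetD)
    have x1eq: "x1 = (b, (1/\<rho>) *\<^sub>R outer b b - q *\<^sub>R mat 1)"
      using Kset_elem(2)[of b "snd x1" \<rho> q] S(2) x1(1) rho b_def by (metis prod.collapse subsetD)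
    have wform: "w = (u x2 / 2) *\<^sub>R (a - b, (1/\<rho>) *\<^sub>R outer a a - (1/\<rho>) *\<^sub>R outer b b)"
      unfolding w_def by (subst x2eq, subst x1eq) simp
    have sym1: "snd x1 \<in> symm0" "snd x2 \<in> symm0"
      using Kset_elem(3) S(2) x1(1) x2(1) rho by (metis prod.collapse subsetD)+
    have Ubs: "snd w \<in> symm0" unfolding w_def
      using sym1 subspace_symm0 by (simp add: subspace_diff[OF subspace_symm0] subspace_scale[OF subspace_symm0])
    have yin: "?z + \<mu> *\<^sub>R (x2 - x1) \<in> convex hull Kset \<rho> q" if "\<bar>\<mu>\<bar> \<le> u x2" for \<mu>
      using hull_move[OF S(1) u(1) u(2) u(3)[symmetric] x2(1) x1(1) x12 that x1(2)[rule_format, OF x2(1)]]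
        hull_mono[OF S(2)] by blast
    have seg: "closed_segment (?z - w) (?z + w) \<subseteq> intKco \<rho> q"
    proof
      fix p assume "p \<in> closed_segment (?z - w) (?z + w)"
      then obtain s where s: "0 \<le> s" "s \<le> 1" "p = (1 - s) *\<^sub>R (?z - w) + s *\<^sub>R (?z + w)"
        unfolding closed_segment_def by auto
      have p: "p = ?z + (2 * s - 1) *\<^sub>R w" using s(3) seg_id by simp
      show "p \<in> intKco \<rho> q"
      proof (cases "2 * s - 1 \<ge> 0")
        case True
        have "p = (1 - (2 * s - 1)/2) *\<^sub>R ?z + ((2 * s - 1)/2) *\<^sub>R (?z + u x2 *\<^sub>R (x2 - x1))"
          unfolding p w_def by (rule seg_id2)
        moreover have "?z + u x2 *\<^sub>R (x2 - x1) \<in> convex hull Kset \<rho> q" using yin ux2 by simp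
        ultimately show ?thesis using intKco_shift[OF rho mU, of "u x2 *\<^sub>R (x2 - x1) + ?z" "(2 * s - 1)/2"] True s
          by (simp add: add.commute)
      next
        case False
        have "p = (1 - (-(2 * s - 1))/2) *\<^sub>R ?z + ((-(2 * s - 1))/2) *\<^sub>R (?z + (- u x2) *\<^sub>R (x2 - x1))"
          unfolding p w_def by (rule seg_id3)
        moreover have "?z + (- u x2) *\<^sub>R (x2 - x1) \<in> convex hull Kset \<rho> q" using yin[of "- u x2"] ux2 by simp
        ultimately show ?thesis using intKco_shift[OF rho mU, of "?z + (- u x2) *\<^sub>R (x2 - x1)" "(-(2 * s - 1))/2"] False s
          by simp
      qed
    qed
    have nmb: "norm (fst w) = g x2 / 2"
      unfolding w_def g_def a_def b_def using ux2 by simp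
    have bound: "(1 / (4 * real N)) / R * (R^2 - (norm m)\<^sup>2) \<le> g x2 / 2"
    proof -
      have "(1 / (4 * real N)) / R * (R^2 - (norm m)\<^sup>2) \<le> (1 / (4 * real N)) / R * (real N * g x2 * (2 * R))"
        using key R0 N0 by (intro mult_left_mono) auto
      also have "\<dots> = g x2 / 2" using R0 N0 by (simp add: field_simps)
      finally show ?thesis .
    qed
    show ?thesis
    proof (rule exI[of _ "fst w"], rule exI[of _ "snd w"], intro conjI)
      show "snd w \<in> symm0" by (rule Ubs)
      have e1: "(m - fst w, U - snd w) = ?z - w" and e2: "(m + fst w, U + snd w) = ?z + w"
        by (simp_all add: prod_eq_iff)
      show "closed_segment (m - fst w, U - snd w) (m + fst w, U + snd w) \<subseteq> intKco \<rho> q"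
        unfolding e1 e2 by (rule seg)
      have na: "norm a = sqrt (real CARD('n) * \<rho> * q)" using nS[OF x2(1)] a_def R_def by simp
      have nb': "norm b = sqrt (real CARD('n) * \<rho> * q)" using nb R_def by simp
      show "\<exists>a' b' t. norm a' = sqrt (real CARD('n) * \<rho> * q) \<and>
                       norm b' = sqrt (real CARD('n) * \<rho> * q) \<and> a' \<noteq> b' \<and>
                       (fst w, snd w) = t *\<^sub>R (a' - b', (1/\<rho>) *\<^sub>R outer a' a' - (1/\<rho>) *\<^sub>R outer b' b')"
        by (rule exI[of _ a], rule exI[of _ b], rule exI[of _ "u x2 / 2"]) (use na nb' ab wform in simp)
      show "1 / (4 * real N) / sqrt (real CARD('n) * \<rho> * q) * (real CARD('n) * \<rho> * q - (norm m)\<^sup>2) \<le> norm (fst w)"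
      proof -
        have b2: "(1 / (4 * real N)) / R * (R^2 - (norm m)\<^sup>2) \<le> norm (fst w)"
          using bound nmb by linarith
        show ?thesis using b2[unfolded R2, unfolded R_def] by blast
      qed
    qed
  qed
qed

theorem lemma2p3:
  assumes "CARD('n) \<ge> 3"
  shows "\<exists>C>0. \<forall>(\<rho>::real) (q::real) (m::real^'n) (U::real^'n^'n).
           \<rho> > 0 \<longrightarrow> q > 0 \<longrightarrow> (m, U) \<in> intKco \<rho> q \<longrightarrow>
           (\<exists>mb Ub. Ub \<in> symm0 \<and>
              closed_segment (m - mb, U - Ub) (m + mb, U + Ub) \<subseteq> intKco \<rho> q \<and>
              (\<exists>a b t. norm a = sqrt (real CARD('n) * \<rho> * q) \<and>
                       norm b = sqrt (real CARD('n) * \<rho> * q) \<and> a \<noteq> b \<and>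
                       (mb, Ub) = t *\<^sub>R (a - b, (1/\<rho>) *\<^sub>R outer a a - (1/\<rho>) *\<^sub>R outer b b)) \<and>
              norm mb \<ge> C / sqrt (real CARD('n) * \<rho> * q) *
                         (real CARD('n) * \<rho> * q - (norm m)\<^sup>2))"
proof -
  define N where "N = DIM((real^'n) \<times> (real^'n^'n)) + 1"
  show ?thesis
  proof (rule exI[of _ "1 / (4 * real N)"], intro conjI allI impI)
    show "0 < 1 / (4 * real N)" unfolding N_def by (simp add: add_pos_nonneg)
    fix \<rho> q :: real and m :: "real^'n" and U :: "real^'n^'n"
    assume "\<rho> > 0" "q > 0" "(m, U) \<in> intKco \<rho> q"
    from main_lemma[OF this] show "\<exists>mb Ub. Ub \<in> symm0 \<and>
              closed_segment (m - mb, U - Ub) (m + mb, U + Ub) \<subseteq> intKco \<rho> q \<and>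
              (\<exists>a b t. norm a = sqrt (real CARD('n) * \<rho> * q) \<and>
                       norm b = sqrt (real CARD('n) * \<rho> * q) \<and> a \<noteq> b \<and>
                       (mb, Ub) = t *\<^sub>R (a - b, (1/\<rho>) *\<^sub>R outer a a - (1/\<rho>) *\<^sub>R outer b b)) \<and>
              norm mb \<ge> (1 / (4 * real N)) / sqrt (real CARD('n) * \<rho> * q) *
                         (real CARD('n) * \<rho> * q - (norm m)\<^sup>2)"
      unfolding N_def .
  qed
qed

end
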